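(* For every prime $p$, the polynomial $P_{2,p}(z)=\sum_{n=0}^{p-1}\left(\frac{-1}{2n-1}\binom{2n}{n}^2\bmod p\right)z^n\in\mathbb{F}_p[z]$ is separable over $\overline{\mathbb{F}_p}$; in particular $P_{2,p}$ and its derivative $P_{2,p}'$ have no common root.
   Context: The coefficients $\frac{-1}{2n-1}\binom{2n}{n}^2$ are integers, so their reduction mod $p$ makes sense. *)

theory Defs
  imports "Berlekamp_Zassenhaus.Finite_Field" "HOL-Computational_Algebra.Polynomial"
begin

text \<open>The integer coefficient  -1/(2n-1) * binom(2n,n)^2  (the division is exact).\<close>
definition P2_coeff :: "nat \<Rightarrow> int" where
  "P2_coeff n = - ((int ((2*n) choose n))^2 div (2 * int n - 1))"

definition P2 :: "'p::prime_card mod_ring poly" where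
  "P2 = (\<Sum>n<CARD('p). monom (of_int (P2_coeff n)) n)"

text \<open>Separable: coprime to its formal derivative (equivalently, no repeated root /
  no common root with the derivative over the algebraic closure).\<close>
definition separable_poly :: "'a::field poly \<Rightarrow> bool" where
  "separable_poly f \<longleftrightarrow> coprime f (pderiv f)"

end

theory Submission
  imports Defs
begin


lemma binom_rec: "(Suc n) * ((2*Suc n) choose Suc n) = 2*(2*n+1) * ((2*n) choose n)"
proof -
  have a: "Suc n * (Suc (Suc (2*n)) choose Suc n) = Suc (Suc (2*n)) * (Suc (2*n) choose n)"
    using Suc_times_binomial_eq[of "Suc (2*n)" n] by simp
  have s: "Suc (2*n) choose n = Suc (2*n) choose Suc n"
    using binomial_symmetric[of n "Suc (2*n)"] by simp
  have b: "Suc n * (Suc (2*n) choose n) = Suc (2*n) * ((2*n) choose n)"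
    unfolding s using Suc_times_binomial_eq[of "2*n" n] by simp
  have c: "2*Suc n choose Suc n = Suc (Suc (2*n)) choose Suc n" by (simp only: mult_Suc_right) simp
  have ar: "\<And>X Y B. Suc n * X = Suc (Suc (2*n)) * Y \<Longrightarrow> Suc n * Y = Suc (2*n) * B \<Longrightarrow>
     Suc n * (Suc n * X) = Suc n * (2*(2*n+1) * B)"
    by (simp only: mult.left_commute[of "Suc n"]) (simp add: algebra_simps)
  have "Suc n * (Suc n * ((2*Suc n) choose Suc n)) = Suc n * (2*(2*n+1) * ((2*n) choose n))"
    unfolding c by (rule ar[OF a b])
  then show ?thesis by (simp only: mult_left_cancel)
qed

lemma dvd_binom: "int (2*n) - 1 dvd int ((2*n) choose n)"
proof (cases n)
  case 0 then show ?thesis by simp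
next
  case (Suc m)
  have e0: "int n * int ((2*n) choose n) = 2 * (2 * int m + 1) * int ((2*m) choose m)"
    using arg_cong[OF binom_rec[of m], of int] Suc by (simp del: binomial_Suc_Suc add: algebra_simps)
  have e: "int n * int ((2*n) choose n) = (int (2*n) - 1) * (2 * int ((2*m) choose m))"
    using e0 Suc by (simp del: binomial_Suc_Suc)
  have "coprime (int (2*n) - 1) (int n)"
  proof (rule coprimeI)
    fix c assume h: "c dvd int (2*n) - 1" "c dvd int n"
    have h2: "c dvd 2 * int n" using h(2) by (rule dvd_mult)
    have "c dvd 2 * int n - (int (2*n) - 1)"
      by (rule dvd_diff[OF h2 h(1)])
    moreover have "2 * int n - (int (2*n) - 1) = 1" by simp
    ultimately show "is_unit c" by metis
  qed
  then show ?thesis using e by (metis coprime_dvd_mult_right_iff dvd_triv_left)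
qed

lemma C_mult: "P2_coeff n * (2 * int n - 1) = - ((int ((2*n) choose n))^2)"
proof -
  have d: "2 * int n - 1 dvd (int ((2*n) choose n))^2"
    using dvd_binom[of n] by (simp add: power2_eq_square)
  show ?thesis unfolding P2_coeff_def using d by simp
qed

lemma C_rec: "(int n + 1)^2 * P2_coeff (Suc n) = (16 * (int n)^2 - 4) * P2_coeff n"
proof -
  define B where "B = int ((2*n) choose n)"
  define B1 where "B1 = int ((2*Suc n) choose Suc n)"
  have r: "(int n + 1) * B1 = 2 * (2 * int n + 1) * B"
    using arg_cong[OF binom_rec[of n], of int] unfolding B_def B1_def by (simp add: algebra_simps)
  have c1: "P2_coeff (Suc n) * (2 * int n + 1) = - (B1^2)"
    using C_mult[of "Suc n"] unfolding B1_def by (simp add: algebra_simps)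
  have c0: "P2_coeff n * (2 * int n - 1) = - (B^2)"
    using C_mult[of n] unfolding B_def by simp
  have "(2 * int n + 1) * ((int n + 1)^2 * P2_coeff (Suc n)) = (int n + 1)^2 * (P2_coeff (Suc n) * (2 * int n + 1))"
    by (simp add: algebra_simps)
  also have "\<dots> = - (((int n + 1) * B1)^2)"
    unfolding c1 by (simp add: power_mult_distrib)
  also have "\<dots> = - 4 * (2 * int n + 1)^2 * B^2" unfolding r by (simp add: algebra_simps power2_eq_square)
  also have "\<dots> = 4 * (2 * int n + 1)^2 * (P2_coeff n * (2 * int n - 1))" unfolding c0 by simp
  also have "\<dots> = (2 * int n + 1) * ((16 * (int n)^2 - 4) * P2_coeff n)"
    by (simp add: algebra_simps power2_eq_square)
  finally have "(2 * int n + 1) * ((int n + 1)^2 * P2_coeff (Suc n)) = (2 * int n + 1) * ((16 * (int n)^2 - 4) * P2_coeff n)" .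
  moreover have "2 * int n + 1 \<noteq> 0" by linarith
  ultimately show ?thesis by simp
qed


lemma ode_gen:
  fixes f :: "'a::idom poly"
  assumes rec: "\<And>n. of_nat (Suc n)^2 * coeff f (Suc n) = (16 * of_nat n ^2 - 4) * coeff f n"
  shows "[:0,1:] * [:1,-16:] * pderiv (pderiv f) + [:1,-16:] * pderiv f + smult 4 f = 0"
proof (rule poly_eqI)
  fix n
  show "coeff ([:0,1:] * [:1,-16:] * pderiv (pderiv f) + [:1,-16:] * pderiv f + smult 4 f) n = coeff 0 n"
  proof (cases n)
    case 0
    then show ?thesis using rec[of 0] by (simp add: coeff_pderiv)
  next
    case (Suc m)
    show ?thesis
    proof (cases m)
      case 0
      then show ?thesis using rec[of 1] Suc by (simp add: coeff_pderiv algebra_simps power2_eq_square)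
    next
      case (Suc k)
      then show ?thesis using rec[of "Suc m"] \<open>n = Suc m\<close> by (simp add: coeff_pderiv algebra_simps power2_eq_square)
    qed
  qed
qed


lemma coeff_P2: "coeff (P2 :: 'p::prime_card mod_ring poly) n = (if n < CARD('p) then of_int (P2_coeff n) else 0)"
  unfolding P2_def coeff_sum by (simp add: if_distrib cong: if_cong)

lemma C_rec_ring: "(of_nat (Suc n) :: 'a::comm_ring_1)^2 * of_int (P2_coeff (Suc n)) = (16 * of_nat n ^2 - 4) * of_int (P2_coeff n)"
proof -
  have "of_int ((int n + 1)^2 * P2_coeff (Suc n)) = (of_int ((16 * (int n)^2 - 4) * P2_coeff n) :: 'a)"
    using C_rec[of n] by simp
  then show ?thesis by (simp add: add.commute)
qed

lemma P2_rec: "of_nat (Suc n)^2 * coeff (P2 :: 'p::prime_card mod_ring poly) (Suc n) = (16 * of_nat n ^2 - 4) * coeff (P2 :: 'p::prime_card mod_ring poly) n"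
proof -
  consider "Suc n < CARD('p)" | "Suc n = CARD('p)" | "Suc n > CARD('p)" by linarith
  then show ?thesis
  proof cases
    case 1 then show ?thesis using C_rec_ring[of n, where 'a="'p mod_ring"] by (simp add: coeff_P2)
  next
    case 2
    have "(16 * of_nat n ^2 - 4) * (of_int (P2_coeff n) :: 'p mod_ring) = 0"
      using C_rec_ring[of n, where 'a="'p mod_ring"] 2 by (metis of_nat_card_eq_0 zero_power2 mult_zero_left)
    then show ?thesis using 2 by (simp add: coeff_P2)
  next
    case 3 then show ?thesis by (simp add: coeff_P2)
  qed
qed

lemma P2_ode: "[:0,1:] * [:1,-16:] * pderiv (pderiv P2) + [:1,-16:] * pderiv P2 + smult 4 (P2 :: 'p::prime_card mod_ring poly) = 0"
  by (rule ode_gen) (rule P2_rec)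

lemma P2_0: "poly (P2 :: 'p::prime_card mod_ring poly) 0 = 1"
proof -
  have "0 < CARD('p)" by simp
  then show ?thesis by (simp add: poly_0_coeff_0 coeff_P2 P2_coeff_def)
qed

lemma P2_deg: "degree (P2 :: 'p::prime_card mod_ring poly) < CARD('p)"
proof -
  have "CARD('p) > 1" using prime_card[where 'a='p] prime_gt_1_nat by blast
  then have "degree (P2 :: 'p::prime_card mod_ring poly) \<le> CARD('p) - 1"
    by (intro degree_le) (auto simp: coeff_P2)
  then show ?thesis using \<open>CARD('p) > 1\<close> by linarith
qed


lemma of_nat_ne0: "0 < n \<Longrightarrow> n < CARD('p) \<Longrightarrow> (of_nat n :: 'p::prime_card mod_ring) \<noteq> 0"
  using of_nat_0_mod_ring_dvd by (metis nat_dvd_not_less)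

lemma pderiv_props:
  fixes q :: "'p::prime_card mod_ring poly"
  assumes "0 < degree q" "degree q < CARD('p)"
  shows "pderiv q \<noteq> 0" "degree (pderiv q) < degree q"
proof -
  have "coeff (pderiv q) (degree q - 1) = of_nat (degree q) * lead_coeff q"
    using assms by (simp add: coeff_pderiv)
  moreover have "lead_coeff q \<noteq> 0" using assms by auto
  ultimately have "coeff (pderiv q) (degree q - 1) \<noteq> 0" using of_nat_ne0[OF assms] by simp
  then show "pderiv q \<noteq> 0" by auto
  have "degree (pderiv q) \<le> degree q - 1"
    by (rule degree_le) (auto simp: coeff_pderiv coeff_eq_0)
  then show "degree (pderiv q) < degree q" using assms by linarith
qed

lemma not_dvd_pderiv:
  fixes q :: "'p::prime_card mod_ring poly"
  assumes "0 < degree q" "degree q < CARD('p)"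
  shows "\<not> q dvd pderiv q"
proof
  assume "q dvd pderiv q"
  then have "degree q \<le> degree (pderiv q)" using pderiv_props(1)[OF assms] by (rule dvd_imp_degree_le)
  then show False using pderiv_props(2)[OF assms] by linarith
qed

lemma deriv_step:
  fixes q h :: "'p::prime_card mod_ring poly"
  assumes q: "prime q" and h: "\<not> q dvd h" and d: "degree q < CARD('p)" and j: "Suc j < CARD('p)"
  shows "\<exists>g. pderiv (q ^ Suc j * h) = q ^ j * g \<and> \<not> q dvd g"
proof -
  have q0: "q \<noteq> 0" using q by auto
  have dq: "0 < degree q" using q q0 is_unit_iff_degree[OF q0] by (auto simp: prime_def prime_elem_def)
  define g where "g = smult (of_nat (Suc j)) (pderiv q) * h + q * pderiv h"
  have "pderiv (q ^ Suc j * h) = q ^ j * g"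
    unfolding g_def pderiv_mult pderiv_power_Suc by (simp add: mult_ac distrib_left)
  moreover have "\<not> q dvd g"
  proof
    assume "q dvd g"
    then have "q dvd smult (of_nat (Suc j)) (pderiv q) * h" unfolding g_def
      by (simp add: dvd_add_left_iff)
    then have "q dvd smult (of_nat (Suc j)) (pderiv q)" using h prime_dvd_mult_iff[OF q] by blast
    then have "q dvd pderiv q" using dvd_smult_cancel of_nat_ne0[OF _ j] by blast
    then show False using not_dvd_pderiv[OF dq d] by blast
  qed
  ultimately show ?thesis by blast
qed


lemma sum3_zero: "(a::'a::ab_group_add) + b + c = 0 \<Longrightarrow> a = - (b + c)"
  by (simp only: eq_neg_iff_add_eq_0 add.assoc)

lemma sep_from_ode:
  fixes f :: "'p::prime_card mod_ring poly"
  assumes ode: "[:0,1:] * [:1,-16:] * pderiv (pderiv f) + [:1,-16:] * pderiv f + smult 4 f = 0"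
    and f0: "poly f 0 \<noteq> 0" and deg: "degree f < CARD('p)"
  shows "coprime f (pderiv f)"
proof (rule ccontr)
  assume nc: "\<not> coprime f (pderiv f)"
  have fnz: "f \<noteq> 0" using f0 by auto
  let ?z = "[:0,1:] :: 'p mod_ring poly"
  let ?M = "[:1,-16:] :: 'p mod_ring poly"
  have "gcd f (pderiv f) \<noteq> 0" using fnz by simp
  moreover have "\<not> is_unit (gcd f (pderiv f))" using nc is_unit_gcd by blast
  ultimately obtain q where qg: "q dvd gcd f (pderiv f)" and q: "prime q"
    using prime_divisor_exists by blast
  have qf: "q dvd f" and qf': "q dvd pderiv f" using qg by auto
  have q0: "q \<noteq> 0" using q by auto
  have qnu: "\<not> is_unit q" using q by (auto simp: prime_def prime_elem_def)
  have dq: "0 < degree q" using qnu is_unit_iff_degree[OF q0] by auto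
  have dqf: "degree q \<le> degree f" using qf fnz by (rule dvd_imp_degree_le)
  have dqp: "degree q < CARD('p)" using dqf deg by linarith
  have qz: "\<not> q dvd ?z"
  proof
    assume "q dvd ?z"
    have e: "?z * synthetic_div f 0 + [:poly f 0:] = f" using synthetic_div_correct'[where p=f and c=0] by (simp only: minus_zero)
    have "q dvd ?z * synthetic_div f 0" using \<open>q dvd ?z\<close> by (rule dvd_mult2)
    then have "q dvd [:poly f 0:]" using qf e by (metis dvd_add_right_iff)
    moreover have "is_unit [:poly f 0:]" using f0 by (simp add: is_unit_const_poly_iff)
    ultimately have "is_unit q" by (rule dvd_unit_imp_unit)
    then show False using qnu by simp
  qed
  define k where "k = multiplicity q f"
  obtain h where fk: "f = q ^ k * h" and qh: "\<not> q dvd h"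
    unfolding k_def using fnz qnu by (rule multiplicity_decompose')
  have k: "k < CARD('p)"
  proof -
    have "q ^ k dvd f" using fk by simp
    then have "degree (q ^ k) \<le> degree f" using fnz by (rule dvd_imp_degree_le)
    then have "k * degree q \<le> degree f" by (simp add: degree_power_eq[OF q0] mult.commute)
    moreover have "k \<le> k * degree q" using dq by simp
    ultimately show ?thesis using deg by linarith
  qed
  have "k \<noteq> 0"
  proof
    assume "k = 0"
    then have "f = h" using fk by simp
    then show False using qf qh by simp
  qed
  then obtain j where kj: "k = Suc j" by (cases k) auto
  have jc: "Suc j < CARD('p)" using k kj by simp
  obtain g1 where g1': "pderiv (q ^ Suc j * h) = q ^ j * g1" and qg1: "\<not> q dvd g1"
    using deriv_step[OF q qh dqp jc] by blast
  have g1: "pderiv f = q ^ j * g1" using g1' fk kj by simp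
  have "j \<noteq> 0"
  proof
    assume "j = 0"
    then have "pderiv f = g1" using g1 by simp
    then show False using qf' qg1 by simp
  qed
  then obtain i where ji: "j = Suc i" by (cases j) auto
  have ic: "Suc i < CARD('p)" using jc ji by simp
  obtain g2 where g2': "pderiv (q ^ Suc i * g1) = q ^ i * g2" and qg2: "\<not> q dvd g2"
    using deriv_step[OF q qg1 dqp ic] by blast
  have g2: "pderiv (pderiv f) = q ^ i * g2" using g2' g1 ji by simp
  have L: "?z * ?M * pderiv (pderiv f) = - (?M * pderiv f + smult 4 f)"
    by (rule sum3_zero[OF ode])
  have pf: "pderiv f = q ^ Suc i * g1" using g1 ji by simp
  have ff: "f = q ^ Suc i * (q * h)" using fk kj ji by (simp add: mult_ac)
  have "q ^ Suc i dvd ?M * pderiv f + smult 4 f"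
  proof (rule dvd_add)
    show "q ^ Suc i dvd ?M * pderiv f" unfolding pf by (rule dvd_mult) simp
    show "q ^ Suc i dvd smult 4 f" unfolding ff by (rule dvd_smult) simp
  qed
  then have "q ^ Suc i dvd ?z * ?M * pderiv (pderiv f)" unfolding L by (simp only: dvd_minus_iff)
  moreover have "?z * ?M * pderiv (pderiv f) = q ^ i * (?z * ?M * g2)" unfolding g2 by (simp only: mult_ac)
  ultimately have "q ^ i * q dvd q ^ i * (?z * ?M * g2)" by (simp only: power_Suc2)
  then have "q dvd ?z * ?M * g2" using q0 by (simp only: dvd_mult_cancel_left power_eq_0_iff) simp
  then have qM: "q dvd ?M" using qz qg2 prime_dvd_mult_iff[OF q] by blast
  then obtain u where u: "?M = q * u" by (auto simp: dvd_def)
  have ff2: "f = q ^ Suc (Suc i) * h" using fk kj ji by simp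
  have pf2: "?M * pderiv f = q ^ Suc (Suc i) * (u * g1)" unfolding pf u by (simp add: mult_ac)
  have "q ^ Suc (Suc i) dvd ?M * pderiv f + smult 4 f"
  proof (rule dvd_add)
    show "q ^ Suc (Suc i) dvd ?M * pderiv f" unfolding pf2 by simp
    show "q ^ Suc (Suc i) dvd smult 4 f" unfolding ff2 by (rule dvd_smult) simp
  qed
  then have "q ^ Suc (Suc i) dvd ?z * ?M * pderiv (pderiv f)" unfolding L by (simp only: dvd_minus_iff)
  moreover have "?z * ?M * pderiv (pderiv f) = q ^ Suc i * (?z * u * g2)" unfolding g2 u by (simp only: mult_ac power_Suc)
  ultimately have "q ^ Suc i * q dvd q ^ Suc i * (?z * u * g2)" by (simp only: power_Suc2[of q "Suc i"])
  then have "q dvd ?z * u * g2" using q0 by (simp only: dvd_mult_cancel_left power_eq_0_iff) simp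
  then have "q dvd u" using qz qg2 prime_dvd_mult_iff[OF q] by blast
  then have "q * q dvd ?M" using u by simp
  then have "degree (q * q) \<le> degree ?M" by (rule dvd_imp_degree_le) simp
  moreover have "degree ?M \<le> 1" by (rule order_trans[OF degree_pCons_le]) simp
  ultimately show False using dq q0 by (simp add: degree_mult_eq)
qed

theorem mainTheorem15:
  shows "separable_poly (P2 :: 'p::prime_card mod_ring poly)"
  unfolding separable_poly_def
proof (rule sep_from_ode)
  show "[:0,1:] * [:1,-16:] * pderiv (pderiv P2) + [:1,-16:] * pderiv P2 + smult 4 (P2 :: 'p::prime_card mod_ring poly) = 0"
    by (rule P2_ode)
  show "poly (P2 :: 'p::prime_card mod_ring poly) 0 \<noteq> 0" using P2_0[where 'p='p] by simp
  show "degree (P2 :: 'p::prime_card mod_ring poly) < CARD('p)" by (rule P2_deg)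
qed

end
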